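(* Let $f\colon X\to Y$ be a dc-embedding of two-sorted ultrametric spaces. (1) $f$ is continuous if and only if $D_f$ is continuous at $0$ or $X$ is discrete. (2) $f$ is uniformly continuous if and only if $D_f$ is continuous at $0$ or $X$ is uniformly discrete. In particular, a dc-isomorphism is always a uniform homeomorphism.
   Context: A two-sorted ultrametric space is a triple $(X,d_X,D_X)$ where $D_X$ is a linearly ordered set with least element $0$, $X$ is a set, and $d_X\colon X\times X\to D_X$ is symmetric, $d_X(x,y)=0\iff x=y$, and $d_X(x,z)\le\max\{d_X(x,y),d_X(y,z)\}$. A dc-embedding $f\colon X\to Y$ is an injection $f\colon X\to Y$ together with an order embedding $D_f\colon D_X\to D_Y$ with $D_f(0)=0$ such that $d_Y(f(x),f(x'))=D_f(d_X(x,x'))$; a dc-isomorphism is one bijective in both sorts. For $a\in X$ and $r\in D_X\setminus\{0\}$, $B_r(a)=\{x: d_X(x,a)<r\}$. The topology of $X$: $U$ is open iff for each $a\in U$ there is $r\in D_X\setminus\{0\}$ with $B_r(a)\subseteq U$; the uniformity is generated by the partitions $\{B_r(a):a\in X\}$, $r\in D_X\setminus\{0\}$. Thus $f$ is continuous iff for all $\varepsilon\in D_Y\setminus\{0\}$ and $x\in X$ there is $\delta\in D_X\setminus\{0\}$ with $f[B_\delta(x)]\subseteq B_\varepsilon(f(x))$, and uniformly continuous if $\delta$ can be chosen independently of $x$. $D_f$ is continuous at $0$ if there is no $\varepsilon\in D_Y$ with $0<\varepsilon<D_f(r)$ for all $r\in D_X\setminus\{0\}$. $X$ is discrete if for each $x$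 there is $\varepsilon\in D_X\setminus\{0\}$ with $B_\varepsilon(x)=\{x\}$, and uniformly discrete if $\varepsilon$ can be chosen independently of $x$. *)

theory Defs
  imports Main
begin

text \<open>A two-sorted ultrametric space: carrier X, distance set = the linearly
ordered type 'd, whose least element bot plays the role of 0.\<close>

definition ultrametric :: "'a set \<Rightarrow> ('a \<Rightarrow> 'a \<Rightarrow> 'd::{linorder,order_bot}) \<Rightarrow> bool" where
  "ultrametric X d \<longleftrightarrow>
     (\<forall>x\<in>X. \<forall>y\<in>X. d x y = d y x) \<and>
     (\<forall>x\<in>X. \<forall>y\<in>X. d x y = bot \<longleftrightarrow> x = y) \<and>
     (\<forall>x\<in>X. \<forall>y\<in>X. \<forall>z\<in>X. d x z \<le> max (d x y) (d y z))"

definition uball :: "'a set \<Rightarrow> ('a \<Rightarrow> 'a \<Rightarrow> 'd::{linorder,order_bot}) \<Rightarrow> 'a \<Rightarrow> 'd \<Rightarrow> 'a set" where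
  "uball X d a r = {x\<in>X. d x a < r}"

definition dc_embedding ::
  "'a set \<Rightarrow> ('a \<Rightarrow> 'a \<Rightarrow> 'd::{linorder,order_bot}) \<Rightarrow>
   'b set \<Rightarrow> ('b \<Rightarrow> 'b \<Rightarrow> 'e::{linorder,order_bot}) \<Rightarrow>
   ('a \<Rightarrow> 'b) \<Rightarrow> ('d \<Rightarrow> 'e) \<Rightarrow> bool" where
  "dc_embedding X dX Y dY f Df \<longleftrightarrow>
     ultrametric X dX \<and> ultrametric Y dY \<and>
     inj_on f X \<and> f ` X \<subseteq> Y \<and>
     strict_mono Df \<and> Df bot = bot \<and>
     (\<forall>x\<in>X. \<forall>x'\<in>X. dY (f x) (f x') = Df (dX x x'))"

definition dc_isomorphism ::
  "'a set \<Rightarrow> ('a \<Rightarrow> 'a \<Rightarrow> 'd::{linorder,order_bot}) \<Rightarrow>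
   'b set \<Rightarrow> ('b \<Rightarrow> 'b \<Rightarrow> 'e::{linorder,order_bot}) \<Rightarrow>
   ('a \<Rightarrow> 'b) \<Rightarrow> ('d \<Rightarrow> 'e) \<Rightarrow> bool" where
  "dc_isomorphism X dX Y dY f Df \<longleftrightarrow>
     dc_embedding X dX Y dY f Df \<and> bij_betw f X Y \<and> bij Df"

definition um_continuous ::
  "'a set \<Rightarrow> ('a \<Rightarrow> 'a \<Rightarrow> 'd::{linorder,order_bot}) \<Rightarrow>
   'b set \<Rightarrow> ('b \<Rightarrow> 'b \<Rightarrow> 'e::{linorder,order_bot}) \<Rightarrow> ('a \<Rightarrow> 'b) \<Rightarrow> bool" where
  "um_continuous X dX Y dY f \<longleftrightarrow>
     (\<forall>\<epsilon>. \<epsilon> \<noteq> bot \<longrightarrow> (\<forall>x\<in>X. \<exists>\<delta>. \<delta> \<noteq> bot \<and>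
        f ` uball X dX x \<delta> \<subseteq> uball Y dY (f x) \<epsilon>))"

definition um_uniformly_continuous ::
  "'a set \<Rightarrow> ('a \<Rightarrow> 'a \<Rightarrow> 'd::{linorder,order_bot}) \<Rightarrow>
   'b set \<Rightarrow> ('b \<Rightarrow> 'b \<Rightarrow> 'e::{linorder,order_bot}) \<Rightarrow> ('a \<Rightarrow> 'b) \<Rightarrow> bool" where
  "um_uniformly_continuous X dX Y dY f \<longleftrightarrow>
     (\<forall>\<epsilon>. \<epsilon> \<noteq> bot \<longrightarrow> (\<exists>\<delta>. \<delta> \<noteq> bot \<and> (\<forall>x\<in>X.
        f ` uball X dX x \<delta> \<subseteq> uball Y dY (f x) \<epsilon>)))"

definition continuous_at_zero :: "('d::{linorder,order_bot} \<Rightarrow> 'e::{linorder,order_bot}) \<Rightarrow> bool" where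
  "continuous_at_zero Df \<longleftrightarrow> \<not> (\<exists>\<epsilon>. bot < \<epsilon> \<and> (\<forall>r. r \<noteq> bot \<longrightarrow> \<epsilon> < Df r))"

definition um_discrete :: "'a set \<Rightarrow> ('a \<Rightarrow> 'a \<Rightarrow> 'd::{linorder,order_bot}) \<Rightarrow> bool" where
  "um_discrete X d \<longleftrightarrow> (\<forall>x\<in>X. \<exists>\<epsilon>. \<epsilon> \<noteq> bot \<and> uball X d x \<epsilon> = {x})"

definition um_uniformly_discrete :: "'a set \<Rightarrow> ('a \<Rightarrow> 'a \<Rightarrow> 'd::{linorder,order_bot}) \<Rightarrow> bool" where
  "um_uniformly_discrete X d \<longleftrightarrow> (\<exists>\<epsilon>. \<epsilon> \<noteq> bot \<and> (\<forall>x\<in>X. uball X d x \<epsilon> = {x}))"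

definition um_uniform_homeomorphism ::
  "'a set \<Rightarrow> ('a \<Rightarrow> 'a \<Rightarrow> 'd::{linorder,order_bot}) \<Rightarrow>
   'b set \<Rightarrow> ('b \<Rightarrow> 'b \<Rightarrow> 'e::{linorder,order_bot}) \<Rightarrow> ('a \<Rightarrow> 'b) \<Rightarrow> bool" where
  "um_uniform_homeomorphism X dX Y dY f \<longleftrightarrow>
     bij_betw f X Y \<and> um_uniformly_continuous X dX Y dY f \<and>
     um_uniformly_continuous Y dY X dX (inv_into X f)"

end

theory Submission
  imports Defs
begin

lemma bot_lt_iff_ne: "(x::'d::{linorder,order_bot}) \<noteq> bot \<longleftrightarrow> bot < x"
  using bot_less by blast

lemma part1:
  fixes X :: "'a set" and dX :: "'a \<Rightarrow> 'a \<Rightarrow> 'd::{linorder,order_bot}"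
    and Y :: "'b set" and dY :: "'b \<Rightarrow> 'b \<Rightarrow> 'e::{linorder,order_bot}"
    and f :: "'a \<Rightarrow> 'b" and Df :: "'d \<Rightarrow> 'e"
  assumes E: "dc_embedding X dX Y dY f Df"
  shows "um_continuous X dX Y dY f \<longleftrightarrow> continuous_at_zero Df \<or> um_discrete X dX"
proof -
  have uX: "ultrametric X dX" and uY: "ultrametric Y dY" and fXY: "f ` X \<subseteq> Y"
    and sm: "strict_mono Df" and Db: "Df bot = bot"
    and dd: "\<forall>x\<in>X. \<forall>x'\<in>X. dY (f x) (f x') = Df (dX x x')"
    using E unfolding dc_embedding_def by auto
  have dXb: "\<And>x y. x \<in> X \<Longrightarrow> y \<in> X \<Longrightarrow> dX x y = bot \<longleftrightarrow> x = y"
    using uX unfolding ultrametric_def by blast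
  have dYb: "\<And>x y. x \<in> Y \<Longrightarrow> y \<in> Y \<Longrightarrow> dY x y = bot \<longleftrightarrow> x = y"
    using uY unfolding ultrametric_def by blast
  show ?thesis
  proof
    assume C: "um_continuous X dX Y dY f"
    show "continuous_at_zero Df \<or> um_discrete X dX"
    proof (cases "continuous_at_zero Df")
      case True thus ?thesis by blast
    next
      case False
      then obtain \<epsilon> where e: "bot < \<epsilon>" "\<And>r. r \<noteq> bot \<Longrightarrow> \<epsilon> < Df r"
        unfolding continuous_at_zero_def by blast
      have "um_discrete X dX"
        unfolding um_discrete_def
      proof
        fix x assume x: "x \<in> X"
        from C e(1) x obtain \<delta> where d: "\<delta> \<noteq> bot" "f ` uball X dX x \<delta> \<subseteq> uball Y dY (f x) \<epsilon>"
          unfolding um_continuous_def by (metis bot_lt_iff_ne)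
        have "uball X dX x \<delta> = {x}"
        proof
          show "{x} \<subseteq> uball X dX x \<delta>" using x d(1) dXb[OF x x]
            by (simp add: uball_def bot_lt_iff_ne)
          show "uball X dX x \<delta> \<subseteq> {x}"
          proof
            fix y assume y: "y \<in> uball X dX x \<delta>"
            hence yX: "y \<in> X" by (simp add: uball_def)
            have "f y \<in> uball Y dY (f x) \<epsilon>" using d(2) y by blast
            hence "Df (dX y x) < \<epsilon>" using dd yX x by (simp add: uball_def)
            hence "dX y x = bot" using e(2) by (meson not_less_iff_gr_or_eq)
            thus "y \<in> {x}" using dXb[OF yX x] by simp
          qed
        qed
        thus "\<exists>\<epsilon>. \<epsilon> \<noteq> bot \<and> uball X dX x \<epsilon> = {x}" using d(1) by blast
      qed
      thus ?thesis by blast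
    qed
  next
    assume H: "continuous_at_zero Df \<or> um_discrete X dX"
    show "um_continuous X dX Y dY f"
      unfolding um_continuous_def
    proof (intro allI impI ballI)
      fix \<epsilon> :: 'e and x assume e: "\<epsilon> \<noteq> bot" and x: "x \<in> X"
      show "\<exists>\<delta>. \<delta> \<noteq> bot \<and> f ` uball X dX x \<delta> \<subseteq> uball Y dY (f x) \<epsilon>"
        using H
      proof
        assume "continuous_at_zero Df"
        then obtain r where r: "r \<noteq> bot" "\<not> \<epsilon> < Df r"
          using e unfolding continuous_at_zero_def by (metis bot_lt_iff_ne)
        have "f ` uball X dX x r \<subseteq> uball Y dY (f x) \<epsilon>"
        proof
          fix z assume "z \<in> f ` uball X dX x r"
          then obtain y where y: "y \<in> X" "dX y x < r" "z = f y" by (auto simp: uball_def)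
          have "Df (dX y x) < Df r" using sm y(2) by (simp add: strict_mono_less)
          hence "dY (f y) (f x) < \<epsilon>" using dd y x r(2) by auto
          thus "z \<in> uball Y dY (f x) \<epsilon>" using y fXY by (auto simp: uball_def)
        qed
        thus ?thesis using r by blast
      next
        assume "um_discrete X dX"
        then obtain \<delta> where d: "\<delta> \<noteq> bot" "uball X dX x \<delta> = {x}"
          using x unfolding um_discrete_def by blast
        have "f x \<in> uball Y dY (f x) \<epsilon>" using x fXY dYb[of "f x" "f x"] e
          by (auto simp: uball_def bot_lt_iff_ne)
        thus ?thesis using d by auto
      qed
    qed
  qed
qed

lemma part2:
  fixes X :: "'a set" and dX :: "'a \<Rightarrow> 'a \<Rightarrow> 'd::{linorder,order_bot}"
    and Y :: "'b set" and dY :: "'b \<Rightarrow> 'b \<Rightarrow> 'e::{linorder,order_bot}"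
    and f :: "'a \<Rightarrow> 'b" and Df :: "'d \<Rightarrow> 'e"
  assumes E: "dc_embedding X dX Y dY f Df"
  shows "um_uniformly_continuous X dX Y dY f \<longleftrightarrow> continuous_at_zero Df \<or> um_uniformly_discrete X dX"
proof -
  have uX: "ultrametric X dX" and uY: "ultrametric Y dY" and fXY: "f ` X \<subseteq> Y"
    and sm: "strict_mono Df" and Db: "Df bot = bot"
    and dd: "\<forall>x\<in>X. \<forall>x'\<in>X. dY (f x) (f x') = Df (dX x x')"
    using E unfolding dc_embedding_def by auto
  have dXb: "\<And>x y. x \<in> X \<Longrightarrow> y \<in> X \<Longrightarrow> dX x y = bot \<longleftrightarrow> x = y"
    using uX unfolding ultrametric_def by blast
  have dYb: "\<And>x y. x \<in> Y \<Longrightarrow> y \<in> Y \<Longrightarrow> dY x y = bot \<longleftrightarrow> x = y"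
    using uY unfolding ultrametric_def by blast
  show ?thesis
  proof
    assume C: "um_uniformly_continuous X dX Y dY f"
    show "continuous_at_zero Df \<or> um_uniformly_discrete X dX"
    proof (cases "continuous_at_zero Df")
      case True thus ?thesis by blast
    next
      case False
      then obtain \<epsilon> where e: "bot < \<epsilon>" "\<And>r. r \<noteq> bot \<Longrightarrow> \<epsilon> < Df r"
        unfolding continuous_at_zero_def by blast
      from C e(1) obtain \<delta> where d: "\<delta> \<noteq> bot" "\<And>x. x \<in> X \<Longrightarrow> f ` uball X dX x \<delta> \<subseteq> uball Y dY (f x) \<epsilon>"
        unfolding um_uniformly_continuous_def by (metis bot_lt_iff_ne)
      have "uball X dX x \<delta> = {x}" if x: "x \<in> X" for x
      proof
        show "{x} \<subseteq> uball X dX x \<delta>" using x d(1) dXb[OF x x]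
          by (simp add: uball_def bot_lt_iff_ne)
        show "uball X dX x \<delta> \<subseteq> {x}"
        proof
          fix y assume y: "y \<in> uball X dX x \<delta>"
          hence yX: "y \<in> X" by (simp add: uball_def)
          have "f y \<in> uball Y dY (f x) \<epsilon>" using d(2)[OF x] y by blast
          hence "Df (dX y x) < \<epsilon>" using dd yX x by (simp add: uball_def)
          hence "dX y x = bot" using e(2) by (meson not_less_iff_gr_or_eq)
          thus "y \<in> {x}" using dXb[OF yX x] by simp
        qed
      qed
      hence "um_uniformly_discrete X dX" using d(1) unfolding um_uniformly_discrete_def by blast
      thus ?thesis by blast
    qed
  next
    assume H: "continuous_at_zero Df \<or> um_uniformly_discrete X dX"
    show "um_uniformly_continuous X dX Y dY f"
      unfolding um_uniformly_continuous_def
    proof (intro allI impI)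
      fix \<epsilon> :: 'e assume e: "\<epsilon> \<noteq> bot"
      show "\<exists>\<delta>. \<delta> \<noteq> bot \<and> (\<forall>x\<in>X. f ` uball X dX x \<delta> \<subseteq> uball Y dY (f x) \<epsilon>)"
        using H
      proof
        assume "continuous_at_zero Df"
        then obtain r where r: "r \<noteq> bot" "\<not> \<epsilon> < Df r"
          using e unfolding continuous_at_zero_def by (metis bot_lt_iff_ne)
        have "f ` uball X dX x r \<subseteq> uball Y dY (f x) \<epsilon>" if x: "x \<in> X" for x
        proof
          fix z assume "z \<in> f ` uball X dX x r"
          then obtain y where y: "y \<in> X" "dX y x < r" "z = f y" by (auto simp: uball_def)
          have "Df (dX y x) < Df r" using sm y(2) by (simp add: strict_mono_less)
          hence "dY (f y) (f x) < \<epsilon>" using dd y x r(2) by auto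
          thus "z \<in> uball Y dY (f x) \<epsilon>" using y fXY by (auto simp: uball_def)
        qed
        thus ?thesis using r by blast
      next
        assume "um_uniformly_discrete X dX"
        then obtain \<delta> where d: "\<delta> \<noteq> bot" "\<And>x. x \<in> X \<Longrightarrow> uball X dX x \<delta> = {x}"
          unfolding um_uniformly_discrete_def by blast
        have "f x \<in> uball Y dY (f x) \<epsilon>" if x: "x \<in> X" for x using x fXY dYb[of "f x" "f x"] e
          by (auto simp: uball_def bot_lt_iff_ne)
        thus ?thesis using d by auto
      qed
    qed
  qed
qed

lemma part3:
  fixes X :: "'a set" and dX :: "'a \<Rightarrow> 'a \<Rightarrow> 'd::{linorder,order_bot}"
    and Y :: "'b set" and dY :: "'b \<Rightarrow> 'b \<Rightarrow> 'e::{linorder,order_bot}"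
    and f :: "'a \<Rightarrow> 'b" and Df :: "'d \<Rightarrow> 'e"
  assumes I: "dc_isomorphism X dX Y dY f Df"
  shows "um_uniform_homeomorphism X dX Y dY f"
proof -
  have E: "dc_embedding X dX Y dY f Df" and bf: "bij_betw f X Y" and bD: "bij Df"
    using I unfolding dc_isomorphism_def by auto
  have sm: "strict_mono Df" and Db: "Df bot = bot"
    and dd: "\<forall>x\<in>X. \<forall>x'\<in>X. dY (f x) (f x') = Df (dX x x')"
    using E unfolding dc_embedding_def by auto
  have "continuous_at_zero Df"
    unfolding continuous_at_zero_def
  proof
    assume "\<exists>\<epsilon>. bot < \<epsilon> \<and> (\<forall>r. r \<noteq> bot \<longrightarrow> \<epsilon> < Df r)"
    then obtain \<epsilon> where e: "bot < \<epsilon>" "\<And>r. r \<noteq> bot \<Longrightarrow> \<epsilon> < Df r" by blast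
    obtain r where r: "\<epsilon> = Df r" using bD by (metis bij_pointE)
    have "r \<noteq> bot" using r e(1) Db by auto
    thus False using e(2) r by auto
  qed
  hence U1: "um_uniformly_continuous X dX Y dY f" using part2[OF E] by blast
  have U2: "um_uniformly_continuous Y dY X dX (inv_into X f)"
    unfolding um_uniformly_continuous_def
  proof (intro allI impI)
    fix \<epsilon> :: 'd assume e: "\<epsilon> \<noteq> bot"
    have De: "Df \<epsilon> \<noteq> bot" using e Db bD by (metis bij_pointE)
    have "inv_into X f ` uball Y dY y (Df \<epsilon>) \<subseteq> uball X dX (inv_into X f y) \<epsilon>" if y: "y \<in> Y" for y
    proof
      fix z assume "z \<in> inv_into X f ` uball Y dY y (Df \<epsilon>)"
      then obtain y' where y': "y' \<in> Y" "dY y' y < Df \<epsilon>" "z = inv_into X f y'"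
        by (auto simp: uball_def)
      obtain x where x: "x \<in> X" "y = f x" using y bf by (metis bij_betw_imp_surj_on imageE)
      obtain x' where x': "x' \<in> X" "y' = f x'" using y'(1) bf by (metis bij_betw_imp_surj_on imageE)
      have ix: "inv_into X f y = x" using x bf by (simp add: bij_betw_imp_inj_on)
      have ix': "z = x'" using x' y'(3) bf by (simp add: bij_betw_imp_inj_on)
      have "Df (dX x' x) < Df \<epsilon>" using y'(2) dd x x' by auto
      hence "dX x' x < \<epsilon>" using sm by (simp add: strict_mono_less)
      thus "z \<in> uball X dX (inv_into X f y) \<epsilon>" using ix ix' x' by (simp add: uball_def)
    qed
    thus "\<exists>\<delta>. \<delta> \<noteq> bot \<and> (\<forall>y\<in>Y. inv_into X f ` uball Y dY y \<delta> \<subseteq> uball X dX (inv_into X f y) \<epsilon>)"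
      using De by blast
  qed
  show ?thesis unfolding um_uniform_homeomorphism_def using bf U1 U2 by blast
qed

theorem lemma2p13:
  fixes X :: "'a set" and dX :: "'a \<Rightarrow> 'a \<Rightarrow> 'd::{linorder,order_bot}"
    and Y :: "'b set" and dY :: "'b \<Rightarrow> 'b \<Rightarrow> 'e::{linorder,order_bot}"
    and f :: "'a \<Rightarrow> 'b" and Df :: "'d \<Rightarrow> 'e"
  shows "(dc_embedding X dX Y dY f Df \<longrightarrow>
           (um_continuous X dX Y dY f \<longleftrightarrow> continuous_at_zero Df \<or> um_discrete X dX)) \<and>
         (dc_embedding X dX Y dY f Df \<longrightarrow>
           (um_uniformly_continuous X dX Y dY f \<longleftrightarrow>
              continuous_at_zero Df \<or> um_uniformly_discrete X dX)) \<and>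
         (dc_isomorphism X dX Y dY f Df \<longrightarrow> um_uniform_homeomorphism X dX Y dY f)"
  using part1 part2 part3 by blast

end
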